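(* Let $(R,\mathfrak{m})$ satisfy condition $\bigstar$, and let $S\subseteq R$ be a subring with $S\neq R$. Then $S+\mathfrak{m}^2\neq R$. In particular, if $S$ is a maximal element of the set of proper subrings of $R$ having the same residue field as $R$, then $\mathfrak{m}^2\subseteq S$.
   Context: All rings are commutative and unital. Condition $\bigstar$ on a ring $(R,\mathfrak{m})$: $R$ is a local ring (unique maximal ideal $\mathfrak{m}$, not necessarily Noetherian) of characteristic $p^N$ for a prime $p$ and some $N\ge 1$, with finite residue field $R/\mathfrak{m}\cong\mathbb{F}_q$, and $\mathfrak{m}$ is a nilpotent ideal. Any subring $S$ of $R$ is local with maximal ideal $\mathfrak{m}_S=\mathfrak{m}\cap S$, and its residue field $S/\mathfrak{m}_S$ is naturally a subfield of $R/\mathfrak{m}$; "same residue field as $R$" means $S/\mathfrak{m}_S=R/\mathfrak{m}$ under this identification. *)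

theory Defs
  imports "HOL-Algebra.Algebra"
begin

fun ideal_pow :: "('a, 'b) ring_scheme \<Rightarrow> 'a set \<Rightarrow> nat \<Rightarrow> 'a set" where
  "ideal_pow R I 0 = carrier R"
| "ideal_pow R I (Suc k) = ideal_prod R I (ideal_pow R I k)"

definition has_char :: "('a, 'b) ring_scheme \<Rightarrow> nat \<Rightarrow> bool" where
  "has_char R c \<longleftrightarrow> (\<forall>n::nat. ([n] \<cdot>\<^bsub>R\<^esub> \<one>\<^bsub>R\<^esub> = \<zero>\<^bsub>R\<^esub>) \<longleftrightarrow> c dvd n)"

definition cond_star :: "('a, 'b) ring_scheme \<Rightarrow> 'a set \<Rightarrow> bool" where
  "cond_star R m \<longleftrightarrow>
     cring R \<and>
     maximalideal m R \<and> (\<forall>I. maximalideal I R \<longrightarrow> I = m) \<and>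
     (\<exists>(p::nat) N. Factorial_Ring.prime p \<and> N \<ge> 1 \<and> has_char R (p ^ N)) \<and>
     finite (carrier (R Quot m)) \<and>
     (\<exists>k. ideal_pow R m k = {\<zero>\<^bsub>R\<^esub>})"

text \<open>Subring S has the same residue field as R: the natural embedding
  S/(m \<inter> S) \<rightarrow> R/m is onto, i.e. every residue class mod m meets S.\<close>
definition same_residue_field :: "('a, 'b) ring_scheme \<Rightarrow> 'a set \<Rightarrow> 'a set \<Rightarrow> bool" where
  "same_residue_field R m S \<longleftrightarrow> (\<forall>r \<in> carrier R. \<exists>s \<in> S. r \<ominus>\<^bsub>R\<^esub> s \<in> m)"

end

theory Submission
  imports Defs
begin

context cring
begin

lemma ipow_ideal: "ideal m R \<Longrightarrow> ideal (ideal_pow R m j) R"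
  by (induct j) (auto simp: oneideal ideal_prod_is_ideal)

lemma ipow_mono: "ideal m R \<Longrightarrow> ideal_pow R m (Suc j) \<subseteq> ideal_pow R m j"
  using ideal_prod_inter[OF _ ipow_ideal] by auto

lemma ipow_1: "ideal m R \<Longrightarrow> ideal_pow R m 1 = m"
  by (simp add: ideal_prod_one)

lemma ipow_2: "ideal m R \<Longrightarrow> ideal_pow R m 2 = m \<cdot> m"
  by (simp add: numeral_2_eq_2 ideal_prod_one)

lemma ipow_2_mult: "ideal m R \<Longrightarrow> (m \<cdot> m) \<cdot> ideal_pow R m j = ideal_pow R m (Suc (Suc j))"
  by (simp add: ideal_prod_assoc ipow_ideal)

lemma expand4:
  assumes "s \<in> carrier R" "y \<in> carrier R" "t \<in> carrier R" "z \<in> carrier R"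
  shows "(s \<oplus> y) \<otimes> (t \<oplus> z) = s \<otimes> t \<oplus> ((s \<otimes> z \<oplus> y \<otimes> t) \<oplus> y \<otimes> z)"
  using assms by (simp add: l_distr r_distr a_ac)

lemma stepC:
  assumes m: "ideal m R" and S: "subring S R"
    and H: "S <+> (m \<cdot> m) = carrier R"
  shows "\<forall>x\<in>ideal_pow R m j. \<exists>s\<in>S. \<exists>y\<in>ideal_pow R m (Suc j). x = s \<oplus> y"
proof (induct j)
  case 0
  show ?case
  proof
    fix x assume "x \<in> ideal_pow R m 0"
    then have "x \<in> S <+> (m \<cdot> m)" using H by simp
    then obtain s y where "s \<in> S" "y \<in> m \<cdot> m" "x = s \<oplus> y" unfolding set_add_def' by auto
    moreover have "y \<in> ideal_pow R m 1" using ipow_mono[OF m, of 1] ipow_2[OF m] \<open>y \<in> m \<cdot> m\<close>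
      by (auto simp: numeral_2_eq_2)
    ultimately show "\<exists>s\<in>S. \<exists>y\<in>ideal_pow R m (Suc 0). x = s \<oplus> y" by auto
  qed
next
  case (Suc j)
  have Sc: "S \<subseteq> carrier R" using subringE(1)[OF S] .
  have C1: "\<exists>s\<in>S. \<exists>y\<in>m \<cdot> m. a = s \<oplus> y" if "a \<in> m" for a
  proof -
    have "a \<in> S <+> (m \<cdot> m)" using H that ideal.Icarr[OF m] by auto
    then show ?thesis unfolding set_add_def' by auto
  qed
  have mm: "ideal (m \<cdot> m) R" using ideal_prod_is_ideal[OF m m] .
  have mmsub: "m \<cdot> m \<subseteq> m" using ideal_prod_inter[OF m m] by auto
  let ?P = "ideal_pow R m"
  have P2: "ideal (?P (Suc (Suc j))) R" by (rule ipow_ideal[OF m])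
  show ?case
  proof
    fix x assume "x \<in> ?P (Suc j)"
    then have "x \<in> m \<cdot> ?P j" by simp
    then show "\<exists>s\<in>S. \<exists>y\<in>?P (Suc (Suc j)). x = s \<oplus> y"
    proof (induct x rule: ideal_prod.induct)
      case (prod a b)
      obtain sa y where sa: "sa \<in> S" "y \<in> m \<cdot> m" "a = sa \<oplus> y" using C1[OF prod(1)] by auto
      obtain t z where t: "t \<in> S" "z \<in> ?P (Suc j)" "b = t \<oplus> z" using Suc prod(2) by auto
      have yc: "y \<in> carrier R" using sa(2) ideal.Icarr[OF mm] by auto
      have zc: "z \<in> carrier R" using t(2) ideal.Icarr[OF ipow_ideal[OF m, of "Suc j"]] by auto
      have sac: "sa \<in> carrier R" "t \<in> carrier R" using sa t Sc by auto
      have "sa = a \<ominus> y" using sa yc sac by (simp add: a_minus_def add.m_assoc r_neg)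
      then have sam: "sa \<in> m" using prod(1) sa(2) mmsub m
        by (simp add: additive_subgroup.a_closed additive_subgroup.a_inv_closed a_minus_def ideal.axioms(1) subsetD)
      have "t = b \<ominus> z" using t zc sac by (simp add: a_minus_def add.m_assoc r_neg)
      then have tP: "t \<in> ?P j" using prod(2) t(2) ipow_mono[OF m, of j] ipow_ideal[OF m, of j]
        by (simp add: additive_subgroup.a_closed additive_subgroup.a_inv_closed a_minus_def ideal.axioms(1) subsetD)
      have zP: "z \<in> ?P j" using t(2) ipow_mono[OF m, of j] by auto
      have e1: "sa \<otimes> z \<in> ?P (Suc (Suc j))" using sam t(2) by (simp add: ideal_prod.prod)
      have e2: "y \<otimes> t \<in> ?P (Suc (Suc j))" using ideal_prod.prod[of y "m \<cdot> m" t "?P j" R, OF sa(2) tP] ipow_2_mult[OF m] by simp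
      have e3: "y \<otimes> z \<in> ?P (Suc (Suc j))" using ideal_prod.prod[of y "m \<cdot> m" z "?P j" R, OF sa(2) zP] ipow_2_mult[OF m] by simp
      have "(sa \<otimes> z \<oplus> y \<otimes> t) \<oplus> y \<otimes> z \<in> ?P (Suc (Suc j))"
        using e1 e2 e3 P2 by (simp add: additive_subgroup.a_closed ideal.axioms(1))
      moreover have "sa \<otimes> t \<in> S" using sa t subringE(6)[OF S] by auto
      moreover have "a \<otimes> b = sa \<otimes> t \<oplus> ((sa \<otimes> z \<oplus> y \<otimes> t) \<oplus> y \<otimes> z)"
        using sa t expand4 yc zc sac by simp
      ultimately show ?case by blast
    next
      case (sum x1 x2)
      obtain s1 y1 where 1: "s1 \<in> S" "y1 \<in> ?P (Suc (Suc j))" "x1 = s1 \<oplus> y1" using sum by auto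
      obtain s2 y2 where 2: "s2 \<in> S" "y2 \<in> ?P (Suc (Suc j))" "x2 = s2 \<oplus> y2" using sum by auto
      have c: "s1 \<in> carrier R" "s2 \<in> carrier R" "y1 \<in> carrier R" "y2 \<in> carrier R"
        using 1 2 Sc ideal.Icarr[OF P2] by auto
      have "x1 \<oplus> x2 = (s1 \<oplus> s2) \<oplus> (y1 \<oplus> y2)" using 1 2 c by (simp add: a_ac)
      moreover have "s1 \<oplus> s2 \<in> S" using 1 2 subringE(7)[OF S] by auto
      moreover have "y1 \<oplus> y2 \<in> ?P (Suc (Suc j))" using 1 2 P2
        by (simp add: additive_subgroup.a_closed ideal.axioms(1))
      ultimately show ?case by blast
    qed
  qed
qed

lemma stepD:
  assumes m: "ideal m R" and S: "subring S R"
    and H: "S <+> (m \<cdot> m) = carrier R"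
  shows "\<forall>r\<in>carrier R. \<exists>s\<in>S. \<exists>y\<in>ideal_pow R m n. r = s \<oplus> y"
proof (induct n)
  case 0
  show ?case using subringE(2)[OF S] by force
next
  case (Suc n)
  have Sc: "S \<subseteq> carrier R" using subringE(1)[OF S] .
  show ?case
  proof
    fix r assume r: "r \<in> carrier R"
    obtain s y where 1: "s \<in> S" "y \<in> ideal_pow R m n" "r = s \<oplus> y" using Suc r by auto
    obtain s' y' where 2: "s' \<in> S" "y' \<in> ideal_pow R m (Suc n)" "y = s' \<oplus> y'"
      using stepC[OF m S H, of n] 1 by auto
    have c: "s \<in> carrier R" "s' \<in> carrier R" "y' \<in> carrier R"
      using 1 2 Sc ideal.Icarr[OF ipow_ideal[OF m, of "Suc n"]] by auto
    have "r = (s \<oplus> s') \<oplus> y'" using 1 2 c by (simp add: a_ac)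
    moreover have "s \<oplus> s' \<in> S" using 1 2 subringE(7)[OF S] by auto
    ultimately show "\<exists>s\<in>S. \<exists>y\<in>ideal_pow R m (Suc n). r = s \<oplus> y" using 2 by blast
  qed
qed

lemma part1:
  assumes m: "ideal m R" and S: "subring S R" and nil: "ideal_pow R m k = {\<zero>}"
    and H: "S <+> (m \<cdot> m) = carrier R"
  shows "S = carrier R"
proof
  show "S \<subseteq> carrier R" using subringE(1)[OF S] .
  show "carrier R \<subseteq> S"
  proof
    fix r assume r: "r \<in> carrier R"
    then obtain s y where "s \<in> S" "y \<in> ideal_pow R m k" "r = s \<oplus> y" using stepD[OF m S H, of k] by auto
    then show "r \<in> S" using nil subringE(1)[OF S] by auto
  qed
qed

lemma sum_subring:
  assumes m: "ideal m R" and S: "subring S R"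
  shows "subring (S <+>\<^bsub>R\<^esub> (m \<cdot> m)) R"
proof -
  have mm: "ideal (m \<cdot> m) R" using ideal_prod_is_ideal[OF m m] .
  have Sc: "S \<subseteq> carrier R" using subringE(1)[OF S] .
  have mc: "m \<cdot> m \<subseteq> carrier R" using ideal.Icarr[OF mm] by auto
  have ad: "additive_subgroup (m \<cdot> m) R" using mm ideal.axioms(1) by blast
  show ?thesis
  proof (rule subringI)
    show "S <+>\<^bsub>R\<^esub> m \<cdot> m \<subseteq> carrier R" using Sc mc unfolding set_add_def' by auto
    show "\<one> \<in> S <+>\<^bsub>R\<^esub> m \<cdot> m" unfolding set_add_def'
      using subringE(3)[OF S] additive_subgroup.zero_closed[OF ad] by force
  next
    fix h assume "h \<in> S <+>\<^bsub>R\<^esub> m \<cdot> m"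
    then obtain s y where 1: "s \<in> S" "y \<in> m \<cdot> m" "h = s \<oplus> y" unfolding set_add_def' by auto
    have "\<ominus> h = \<ominus> s \<oplus> \<ominus> y" using 1 Sc mc by (simp add: minus_add subsetD)
    moreover have "\<ominus> s \<in> S" using subringE(5)[OF S] 1 by auto
    moreover have "\<ominus> y \<in> m \<cdot> m" using additive_subgroup.a_inv_closed[OF ad] 1 by auto
    ultimately show "\<ominus> h \<in> S <+>\<^bsub>R\<^esub> m \<cdot> m" unfolding set_add_def' by auto
  next
    fix h1 h2 assume "h1 \<in> S <+>\<^bsub>R\<^esub> m \<cdot> m" "h2 \<in> S <+>\<^bsub>R\<^esub> m \<cdot> m"
    then obtain s y t z where 1: "s \<in> S" "y \<in> m \<cdot> m" "h1 = s \<oplus> y"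
      and 2: "t \<in> S" "z \<in> m \<cdot> m" "h2 = t \<oplus> z" unfolding set_add_def' by auto
    have c: "s \<in> carrier R" "t \<in> carrier R" "y \<in> carrier R" "z \<in> carrier R" using 1 2 Sc mc by auto
    have "h1 \<otimes> h2 = s \<otimes> t \<oplus> ((s \<otimes> z \<oplus> y \<otimes> t) \<oplus> y \<otimes> z)" using 1 2 c expand4 by simp
    moreover have "s \<otimes> t \<in> S" using subringE(6)[OF S] 1 2 by auto
    moreover have "(s \<otimes> z \<oplus> y \<otimes> t) \<oplus> y \<otimes> z \<in> m \<cdot> m"
      using 1 2 c mm additive_subgroup.a_closed[OF ad] ideal.I_l_closed ideal.I_r_closed by metis
    ultimately show "h1 \<otimes> h2 \<in> S <+>\<^bsub>R\<^esub> m \<cdot> m" unfolding set_add_def' by auto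
    have "h1 \<oplus> h2 = (s \<oplus> t) \<oplus> (y \<oplus> z)" using 1 2 c by (simp add: a_ac)
    moreover have "s \<oplus> t \<in> S" using subringE(7)[OF S] 1 2 by auto
    moreover have "y \<oplus> z \<in> m \<cdot> m" using additive_subgroup.a_closed[OF ad] 1 2 by auto
    ultimately show "h1 \<oplus> h2 \<in> S <+>\<^bsub>R\<^esub> m \<cdot> m" unfolding set_add_def' by auto
  qed
qed

end

theorem theorem17:
  fixes R :: "('a, 'b) ring_scheme" and m :: "'a set"
  assumes "cond_star R m"
  shows "(\<forall>S. subring S R \<and> S \<noteq> carrier R \<longrightarrow> S <+>\<^bsub>R\<^esub> (m \<cdot>\<^bsub>R\<^esub> m) \<noteq> carrier R)
    \<and> (\<forall>S. (subring S R \<and> S \<noteq> carrier R \<and> same_residue_field R m S \<and>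
            (\<forall>T. subring T R \<and> T \<noteq> carrier R \<and> same_residue_field R m T \<and> S \<subseteq> T \<longrightarrow> T = S))
          \<longrightarrow> m \<cdot>\<^bsub>R\<^esub> m \<subseteq> S)"
proof -
  have cr: "cring R" and mx: "maximalideal m R" and nil: "\<exists>k. ideal_pow R m k = {\<zero>\<^bsub>R\<^esub>}"
    using assms unfolding cond_star_def by auto
  interpret cring R by (rule cr)
  have m: "ideal m R" using mx maximalideal.axioms(1) by blast
  obtain k where k: "ideal_pow R m k = {\<zero>\<^bsub>R\<^esub>}" using nil by auto
  have P1: "\<forall>S. subring S R \<and> S \<noteq> carrier R \<longrightarrow> S <+>\<^bsub>R\<^esub> (m \<cdot>\<^bsub>R\<^esub> m) \<noteq> carrier R"
    using part1[OF m _ k] by blast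
  moreover have "m \<cdot>\<^bsub>R\<^esub> m \<subseteq> S" if S: "subring S R" "S \<noteq> carrier R" "same_residue_field R m S"
    and mxl: "\<forall>T. subring T R \<and> T \<noteq> carrier R \<and> same_residue_field R m T \<and> S \<subseteq> T \<longrightarrow> T = S" for S
  proof -
    let ?T = "S <+>\<^bsub>R\<^esub> (m \<cdot>\<^bsub>R\<^esub> m)"
    have z: "\<zero>\<^bsub>R\<^esub> \<in> m \<cdot>\<^bsub>R\<^esub> m"
      using additive_subgroup.zero_closed ideal.axioms(1) ideal_prod_is_ideal[OF m m] by blast
    have Sc: "S \<subseteq> carrier R" using subringE(1)[OF S(1)] .
    have ST: "S \<subseteq> ?T" unfolding set_add_def' using z Sc by force
    have mT: "m \<cdot>\<^bsub>R\<^esub> m \<subseteq> ?T" unfolding set_add_def' using subringE(2)[OF S(1)]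
      ideal.Icarr[OF ideal_prod_is_ideal[OF m m]] by force
    have "same_residue_field R m ?T" using S(3) ST unfolding same_residue_field_def by blast
    moreover have "?T \<noteq> carrier R" using P1 S by blast
    ultimately have "?T = S" using mxl sum_subring[OF m S(1)] ST by blast
    then show ?thesis using mT by blast
  qed
  ultimately show ?thesis by blast
qed

end
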